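(* There exists a finite simple graph $G$ with $\alpha(G) \le 3$ that is not perfectly divisible.
   Context: All graphs are finite and simple. $\alpha(G)$ denotes the independence number of $G$ (maximum size of a set of pairwise non-adjacent vertices) and $\omega(G)$ the clique number (maximum size of a clique). A graph $G$ is perfect if $\chi(H)=\omega(H)$ for every induced subgraph $H$ of $G$. A graph $G$ is perfectly divisible if for every induced subgraph $H$ of $G$ with at least one edge, the vertex set $V(H)$ can be partitioned into two sets $A, B$ such that $H[A]$ is perfect and $\omega(H[B]) < \omega(H)$. *)

theory Defs
  imports Main
begin

text \<open>Induced subgraphs are
  given by their vertex sets S \<subseteq> V (with E restricted to S).\<close>

definition simple_graph :: "'a set \<Rightarrow> ('a \<Rightarrow> 'a \<Rightarrow> bool) \<Rightarrow> bool" where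
  "simple_graph V E \<longleftrightarrow> finite V \<and> (\<forall>u v. E u v \<longrightarrow> E v u)
     \<and> (\<forall>v. \<not> E v v) \<and> (\<forall>u v. E u v \<longrightarrow> u \<in> V \<and> v \<in> V)"

definition is_clique :: "'a set \<Rightarrow> ('a \<Rightarrow> 'a \<Rightarrow> bool) \<Rightarrow> 'a set \<Rightarrow> bool" where
  "is_clique V E S \<longleftrightarrow> S \<subseteq> V \<and> (\<forall>u\<in>S. \<forall>v\<in>S. u \<noteq> v \<longrightarrow> E u v)"

definition is_indep :: "'a set \<Rightarrow> ('a \<Rightarrow> 'a \<Rightarrow> bool) \<Rightarrow> 'a set \<Rightarrow> bool" where
  "is_indep V E S \<longleftrightarrow> S \<subseteq> V \<and> (\<forall>u\<in>S. \<forall>v\<in>S. \<not> E u v)"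

definition clique_number :: "'a set \<Rightarrow> ('a \<Rightarrow> 'a \<Rightarrow> bool) \<Rightarrow> nat" where
  "clique_number V E = Max (card ` {S. is_clique V E S})"

definition indep_number :: "'a set \<Rightarrow> ('a \<Rightarrow> 'a \<Rightarrow> bool) \<Rightarrow> nat" where
  "indep_number V E = Max (card ` {S. is_indep V E S})"

definition is_colouring :: "'a set \<Rightarrow> ('a \<Rightarrow> 'a \<Rightarrow> bool) \<Rightarrow> nat \<Rightarrow> ('a \<Rightarrow> nat) \<Rightarrow> bool" where
  "is_colouring V E k f \<longleftrightarrow> f ` V \<subseteq> {..<k} \<and> (\<forall>u\<in>V. \<forall>v\<in>V. E u v \<longrightarrow> f u \<noteq> f v)"

definition chromatic_number :: "'a set \<Rightarrow> ('a \<Rightarrow> 'a \<Rightarrow> bool) \<Rightarrow> nat" where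
  "chromatic_number V E = (LEAST k. \<exists>f. is_colouring V E k f)"

definition perfect :: "'a set \<Rightarrow> ('a \<Rightarrow> 'a \<Rightarrow> bool) \<Rightarrow> bool" where
  "perfect V E \<longleftrightarrow> (\<forall>H \<subseteq> V. chromatic_number H E = clique_number H E)"

definition perfectly_divisible :: "'a set \<Rightarrow> ('a \<Rightarrow> 'a \<Rightarrow> bool) \<Rightarrow> bool" where
  "perfectly_divisible V E \<longleftrightarrow>
     (\<forall>H \<subseteq> V. (\<exists>u\<in>H. \<exists>v\<in>H. E u v) \<longrightarrow>
        (\<exists>A B. A \<union> B = H \<and> A \<inter> B = {} \<and> perfect A E
               \<and> clique_number B E < clique_number H E))"

end

theory Submission
  imports Defs
begin

definition nbt :: "nat list list" where
  "nbt = [[1,2,4,8,9,13,15,16],[2,3,5,9,10,14,16,0],[3,4,6,10,11,15,0,1],[4,5,7,11,12,16,1,2],[5,6,8,12,13,0,2,3],[6,7,9,13,14,1,3,4],[7,8,10,14,15,2,4,5],[8,9,11,15,16,3,5,6],[9,10,12,16,0,4,6,7],[10,11,13,0,1,5,7,8],[11,12,14,1,2,6,8,9],[12,13,15,2,3,7,9,10],[13,14,16,3,4,8,10,11],[14,15,0,4,5,9,11,12],[15,16,1,5,6,10,12,13],[16,0,2,6,7,11,13,14],[0,1,3,7,8,12,14,15]]"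

definition nnt :: "nat list list" where
  "nnt = [[3,5,6,7,10,11,12,14],[4,6,7,8,11,12,13,15],[5,7,8,9,12,13,14,16],[0,6,8,9,10,13,14,15],[1,7,9,10,11,14,15,16],[0,2,8,10,11,12,15,16],[0,1,3,9,11,12,13,16],[0,1,2,4,10,12,13,14],[1,2,3,5,11,13,14,15],[2,3,4,6,12,14,15,16],[0,3,4,5,7,13,15,16],[0,1,4,5,6,8,14,16],[0,1,2,5,6,7,9,15],[1,2,3,6,7,8,10,16],[0,2,3,4,7,8,9,11],[1,3,4,5,8,9,10,12],[2,4,5,6,9,10,11,13]]"

definition nb :: "nat \<Rightarrow> nat list" where "nb u = nbt ! u"
definition nn :: "nat \<Rightarrow> nat list" where "nn u = nnt ! u"

lemma nb_simps:
  "nb 0 = [1,2,4,8,9,13,15,16]"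
  "nb 1 = [2,3,5,9,10,14,16,0]"
  "nb (Suc 0) = [2,3,5,9,10,14,16,0]"
  "nb 2 = [3,4,6,10,11,15,0,1]"
  "nb 3 = [4,5,7,11,12,16,1,2]"
  "nb 4 = [5,6,8,12,13,0,2,3]"
  "nb 5 = [6,7,9,13,14,1,3,4]"
  "nb 6 = [7,8,10,14,15,2,4,5]"
  "nb 7 = [8,9,11,15,16,3,5,6]"
  "nb 8 = [9,10,12,16,0,4,6,7]"
  "nb 9 = [10,11,13,0,1,5,7,8]"
  "nb 10 = [11,12,14,1,2,6,8,9]"
  "nb 11 = [12,13,15,2,3,7,9,10]"
  "nb 12 = [13,14,16,3,4,8,10,11]"
  "nb 13 = [14,15,0,4,5,9,11,12]"
  "nb 14 = [15,16,1,5,6,10,12,13]"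
  "nb 15 = [16,0,2,6,7,11,13,14]"
  "nb 16 = [0,1,3,7,8,12,14,15]"
  by (simp_all add: nb_def nbt_def)

lemma nn_simps:
  "nn 0 = [3,5,6,7,10,11,12,14]"
  "nn 1 = [4,6,7,8,11,12,13,15]"
  "nn (Suc 0) = [4,6,7,8,11,12,13,15]"
  "nn 2 = [5,7,8,9,12,13,14,16]"
  "nn 3 = [0,6,8,9,10,13,14,15]"
  "nn 4 = [1,7,9,10,11,14,15,16]"
  "nn 5 = [0,2,8,10,11,12,15,16]"
  "nn 6 = [0,1,3,9,11,12,13,16]"
  "nn 7 = [0,1,2,4,10,12,13,14]"
  "nn 8 = [1,2,3,5,11,13,14,15]"
  "nn 9 = [2,3,4,6,12,14,15,16]"
  "nn 10 = [0,3,4,5,7,13,15,16]"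
  "nn 11 = [0,1,4,5,6,8,14,16]"
  "nn 12 = [0,1,2,5,6,7,9,15]"
  "nn 13 = [1,2,3,6,7,8,10,16]"
  "nn 14 = [0,2,3,4,7,8,9,11]"
  "nn 15 = [1,3,4,5,8,9,10,12]"
  "nn 16 = [2,4,5,6,9,10,11,13]"
  by (simp_all add: nn_def nnt_def)

definition e17 :: "nat \<Rightarrow> nat \<Rightarrow> bool" where
  "e17 u v \<longleftrightarrow> u < 17 \<and> v < 17 \<and> v \<in> set (nb u)"

lemma upt17: "[0..<17] = [0,1,2,3,4,5,6,7,8,9,10,11,12,13,14,15,16]"
  by (simp add: upt_rec)

lemma all_upt: "(\<forall>a<(17::nat). P a) \<longleftrightarrow> list_all P [0,1,2,3,4,5,6,7,8,9,10,11,12,13,14,15,16]"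
proof -
  have "(\<forall>a<(17::nat). P a) \<longleftrightarrow> list_all P [0..<17]" by (auto simp: list_all_iff)
  then show ?thesis unfolding upt17 .
qed

lemma e17_lt: "e17 u v \<Longrightarrow> u < 17 \<and> v < 17"
  by (simp add: e17_def)

definition bq :: "nat \<Rightarrow> nat \<Rightarrow> bool" where
  "bq u v \<longleftrightarrow> (v \<in> set (nb u) \<longrightarrow> u \<in> set (nb v))
      \<and> ((v \<in> set (nn u)) = (v \<noteq> u \<and> v \<notin> set (nb u)))"

definition bqu :: "nat \<Rightarrow> bool" where
  "bqu u \<longleftrightarrow> list_all (bq u) [0,1,2,3,4,5,6,7,8,9,10,11,12,13,14,15,16]"

definition basechk :: bool where
  "basechk \<longleftrightarrow> list_all bqu [0,1,2,3,4,5,6,7,8,9,10,11,12,13,14,15,16]"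

lemma basechk: basechk
  unfolding basechk_def bqu_def bq_def by (simp del: list_all_iff add: nb_simps nn_simps)

definition irchk :: bool where
  "irchk \<longleftrightarrow> list_all (\<lambda>u. u \<notin> set (nb u)) [0,1,2,3,4,5,6,7,8,9,10,11,12,13,14,15,16]"

lemma irchk: irchk
  unfolding irchk_def by (simp del: list_all_iff add: nb_simps)

lemma base_all: "u < 17 \<Longrightarrow> v < 17 \<Longrightarrow> bq u v"
proof -
  assume "u < 17" "v < 17"
  have "\<forall>u<(17::nat). bqu u" using basechk unfolding basechk_def all_upt[symmetric] .
  then have "bqu u" using \<open>u < 17\<close> by blast
  then have "\<forall>v<(17::nat). bq u v" unfolding bqu_def all_upt[symmetric] .
  then show ?thesis using \<open>v < 17\<close> by blast
qed

lemma e17_irrefl: "\<not> e17 v v"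
proof
  assume "e17 v v"
  then have "v < 17" "v \<in> set (nb v)" unfolding e17_def by auto
  moreover have "\<forall>u<(17::nat). u \<notin> set (nb u)" using irchk unfolding irchk_def all_upt[symmetric] .
  ultimately show False by blast
qed

lemma e17_sym: "e17 u v \<Longrightarrow> e17 v u"
  using base_all unfolding e17_def bq_def by blast

lemma nn_iff: "u < 17 \<Longrightarrow> v < 17 \<Longrightarrow> v \<in> set (nn u) \<longleftrightarrow> (v \<noteq> u \<and> \<not> e17 u v)"
  using base_all unfolding e17_def bq_def by blast

lemma nb_iff: "u < 17 \<Longrightarrow> v < 17 \<Longrightarrow> v \<in> set (nb u) \<longleftrightarrow> e17 u v"
  unfolding e17_def by blast

definition k4a :: "nat \<Rightarrow> bool" where
  "k4a a \<longleftrightarrow> list_all (\<lambda>b. list_all (\<lambda>c. c \<notin> set (nb b) \<or>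
      list_all (\<lambda>d. \<not> (d \<in> set (nb b) \<and> d \<in> set (nb c))) (nb a)) (nb a)) (nb a)"

definition noK4 :: bool where
  "noK4 = list_all k4a [0,1,2,3,4,5,6,7,8,9,10,11,12,13,14,15,16]"

lemma noK4: noK4
  unfolding noK4_def k4a_def by (simp del: list_all_iff add: nb_simps)

definition i4a :: "nat \<Rightarrow> bool" where
  "i4a a \<longleftrightarrow> list_all (\<lambda>b. list_all (\<lambda>c. c \<notin> set (nn b) \<or>
      list_all (\<lambda>d. \<not> (d \<in> set (nn b) \<and> d \<in> set (nn c))) (nn a)) (nn a)) (nn a)"

definition noI4 :: bool where
  "noI4 = list_all i4a [0,1,2,3,4,5,6,7,8,9,10,11,12,13,14,15,16]"

lemma noI4: noI4
  unfolding noI4_def i4a_def by (simp del: list_all_iff add: nn_simps)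

lemma noK4': "a < 17 \<Longrightarrow> b < 17 \<Longrightarrow> c < 17 \<Longrightarrow> d < 17 \<Longrightarrow>
   e17 a b \<Longrightarrow> e17 a c \<Longrightarrow> e17 b c \<Longrightarrow> e17 a d \<Longrightarrow> e17 b d \<Longrightarrow> e17 c d \<Longrightarrow> False"
proof -
  assume h: "a < 17" "b < 17" "c < 17" "d < 17"
   "e17 a b" "e17 a c" "e17 b c" "e17 a d" "e17 b d" "e17 c d"
  then have m: "b \<in> set (nb a)" "c \<in> set (nb a)" "d \<in> set (nb a)" "c \<in> set (nb b)"
     "d \<in> set (nb b)" "d \<in> set (nb c)" using nb_iff by auto
  have "\<forall>a<(17::nat). k4a a" using noK4 unfolding noK4_def all_upt[symmetric] .
  then have "k4a a" using h(1) by blast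
  then show False using m unfolding k4a_def list_all_iff by blast
qed

lemma noI4': "a < 17 \<Longrightarrow> b < 17 \<Longrightarrow> c < 17 \<Longrightarrow> d < 17 \<Longrightarrow> distinct [a,b,c,d] \<Longrightarrow>
   \<not> e17 a b \<Longrightarrow> \<not> e17 a c \<Longrightarrow> \<not> e17 b c \<Longrightarrow> \<not> e17 a d \<Longrightarrow> \<not> e17 b d \<Longrightarrow> \<not> e17 c d \<Longrightarrow> False"
proof -
  assume h: "a < 17" "b < 17" "c < 17" "d < 17" "distinct [a,b,c,d]"
   "\<not> e17 a b" "\<not> e17 a c" "\<not> e17 b c" "\<not> e17 a d" "\<not> e17 b d" "\<not> e17 c d"
  then have m: "b \<in> set (nn a)" "c \<in> set (nn a)" "d \<in> set (nn a)" "c \<in> set (nn b)"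
     "d \<in> set (nn b)" "d \<in> set (nn c)" using nn_iff by auto
  have "\<forall>a<(17::nat). i4a a" using noI4 unfolding noI4_def all_upt[symmetric] .
  then have "i4a a" using h(1) by blast
  then show False using m unfolding i4a_def list_all_iff by blast
qed

lemma card_four:
  assumes "3 < card S"
  shows "\<exists>a b c d. a \<in> S \<and> b \<in> S \<and> c \<in> S \<and> d \<in> S \<and> distinct [a,b,c,d]"
proof -
  have f: "finite S" using assms card.infinite by fastforce
  obtain a where a: "a \<in> S" using assms by fastforce
  have 1: "2 < card (S - {a})" using assms a f by auto
  have "S - {a} \<noteq> {}" using 1 by (metis card.empty not_less0)
  then obtain b where b: "b \<in> S - {a}" by blast
  have 2: "1 < card (S - {a} - {b})" using 1 b f by auto
  have "S - {a} - {b} \<noteq> {}" using 2 by (metis card.empty not_less0)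
  then obtain c where c: "c \<in> S - {a} - {b}" by blast
  have 3: "0 < card (S - {a} - {b} - {c})" using 2 c f by auto
  have "S - {a} - {b} - {c} \<noteq> {}" using 3 by (metis card.empty less_irrefl)
  then obtain d where d: "d \<in> S - {a} - {b} - {c}" by blast
  show ?thesis using a b c d by auto
qed

lemma card_three:
  assumes "2 < card S"
  shows "\<exists>a b c. a \<in> S \<and> b \<in> S \<and> c \<in> S \<and> distinct [a,b,c]"
proof -
  have f: "finite S" using assms card.infinite by fastforce
  obtain a where a: "a \<in> S" using assms by fastforce
  have 1: "1 < card (S - {a})" using assms a f by auto
  have "S - {a} \<noteq> {}" using 1 by (metis card.empty not_less0)
  then obtain b where b: "b \<in> S - {a}" by blast
  have 2: "0 < card (S - {a} - {b})" using 1 b f by auto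
  have "S - {a} - {b} \<noteq> {}" using 2 by (metis card.empty not_less0)
  then obtain c where c: "c \<in> S - {a} - {b}" by blast
  show ?thesis using a b c by auto
qed

lemma Max_card_le:
  assumes "finite V" "\<And>S. S \<subseteq> V \<Longrightarrow> P S \<Longrightarrow> card S \<le> k" "P {}"
    "\<And>S. P S \<Longrightarrow> S \<subseteq> V"
  shows "Max (card ` {S. P S}) \<le> k"
proof -
  have "{S. P S} \<subseteq> Pow V" using assms(4) by blast
  then have "finite {S. P S}" using assms(1) by (simp add: finite_subset)
  then show ?thesis using assms by (subst Max_le_iff) auto
qed

lemma clique_ge:
  assumes "finite V" "is_clique V E S"
  shows "card S \<le> clique_number V E"
proof -
  have "{S. is_clique V E S} \<subseteq> Pow V" by (auto simp: is_clique_def)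
  then have "finite {S. is_clique V E S}" using assms(1) by (simp add: finite_subset)
  then show ?thesis unfolding clique_number_def using assms(2) by (auto intro: Max_ge)
qed

lemma clique_number_le2:
  assumes "distinct [a,b,c,d,e]" "E a b" "E b c" "E c d" "E d e" "E e a"
    "\<not> E a c" "\<not> E a d" "\<not> E b d" "\<not> E b e" "\<not> E c e"
  shows "clique_number {a,b,c,d,e} E \<le> 2"
  unfolding clique_number_def
proof (rule Max_card_le[where V="{a,b,c,d,e}"])
  fix S assume "S \<subseteq> {a,b,c,d,e}" "is_clique {a,b,c,d,e} E S"
  show "card S \<le> 2"
  proof (rule ccontr)
    assume "\<not> card S \<le> 2"
    then obtain x y z where "x \<in> S" "y \<in> S" "z \<in> S" "distinct [x,y,z]"
      using card_three by (metis not_le)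
    then show False using \<open>S \<subseteq> _\<close> \<open>is_clique _ _ S\<close> assms unfolding is_clique_def
      by (smt (verit) distinct_length_2_or_more empty_iff insert_iff subsetD)
  qed
qed (auto simp: is_clique_def)

lemma chromatic_ge3:
  assumes "distinct [a,b,c,d,e]" "E a b" "E b c" "E c d" "E d e" "E e a"
    "\<not> E a c" "\<not> E a d" "\<not> E b d" "\<not> E b e" "\<not> E c e"
    "\<And>u v. E u v \<Longrightarrow> E v u" "\<And>v. \<not> E v v"
  shows "3 \<le> chromatic_number {a,b,c,d,e} E"
proof -
  let ?H = "{a,b,c,d,e}"
  define f where "f x = (if x = e then 2 else if x = a \<or> x = c then 0 else (1::nat))" for x
  have "is_colouring ?H E 3 f" unfolding is_colouring_def f_def using assms by auto
  then have ex: "\<exists>k f. is_colouring ?H E k f" by blast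
  obtain g where g: "is_colouring ?H E (chromatic_number ?H E) g"
    unfolding chromatic_number_def using LeastI_ex[OF ex] by blast
  show ?thesis
  proof (rule ccontr)
    assume "\<not> 3 \<le> chromatic_number ?H E"
    then have "\<forall>x\<in>?H. g x < 2" using g unfolding is_colouring_def by fastforce
    moreover have "g a \<noteq> g b" "g b \<noteq> g c" "g c \<noteq> g d" "g d \<noteq> g e" "g e \<noteq> g a"
      using g assms unfolding is_colouring_def by auto
    ultimately show False by auto
  qed
qed

lemma c5_imperfect:
  assumes "distinct [a,b,c,d,e]" "E a b" "E b c" "E c d" "E d e" "E e a"
    "\<not> E a c" "\<not> E a d" "\<not> E b d" "\<not> E b e" "\<not> E c e" "{a,b,c,d,e} \<subseteq> A"
    "\<And>u v. E u v \<Longrightarrow> E v u" "\<And>v. \<not> E v v"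
  shows "\<not> perfect A E"
proof
  assume "perfect A E"
  then have "chromatic_number {a,b,c,d,e} E = clique_number {a,b,c,d,e} E"
    using assms(12) unfolding perfect_def by blast
  moreover have "clique_number {a,b,c,d,e} E \<le> 2" using clique_number_le2[OF assms(1-11)] .
  moreover have "3 \<le> chromatic_number {a,b,c,d,e} E"
    using assms by (intro chromatic_ge3) auto
  ultimately show False by linarith
qed

fun is_c5 :: "nat list \<Rightarrow> bool" where
  "is_c5 [a,b,c,d,e] = (distinct [a,b,c,d,e] \<and> e17 a b \<and> e17 b c \<and> e17 c d \<and> e17 d e \<and> e17 e a
     \<and> \<not> e17 a c \<and> \<not> e17 a d \<and> \<not> e17 b d \<and> \<not> e17 b e \<and> \<not> e17 c e)"
| "is_c5 _ = False"

datatype tr = Lf "nat list" | Dd nat nat nat | Nd nat tr tr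

fun chk :: "nat list \<Rightarrow> nat list \<Rightarrow> tr \<Rightarrow> bool" where
  "chk Bs As (Lf C) = (is_c5 C \<and> list_all (\<lambda>x. x \<in> set As) C)"
| "chk Bs As (Dd a b c) = (a \<in> set Bs \<and> b \<in> set Bs \<and> c \<in> set Bs \<and> e17 a b \<and> e17 b c \<and> e17 a c)"
| "chk Bs As (Nd v l r) = (chk Bs (v # As) l \<and> chk (v # Bs) As r)"

lemma chk_sound:
  assumes "chk Bs As t" "set Bs \<subseteq> B" "set As \<inter> B = {}"
    "\<forall>a\<in>B. \<forall>b\<in>B. \<forall>c\<in>B. \<not> (e17 a b \<and> e17 b c \<and> e17 a c)"
  shows "\<exists>C. is_c5 C \<and> set C \<inter> B = {}"
  using assms
proof (induction Bs As t rule: chk.induct)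
  case (1 Bs As C)
  then have "set C \<subseteq> set As" "is_c5 C" by (auto simp: list_all_iff)
  then show ?case using 1(3) by blast
next
  case (2 Bs As a b c)
  then have "a \<in> B" "b \<in> B" "c \<in> B" "e17 a b \<and> e17 b c \<and> e17 a c" by auto
  then show ?case using 2(4) by blast
next
  case (3 Bs As v l r)
  show ?case
  proof (cases "v \<in> B")
    case True
    then show ?thesis using 3 by auto
  next
    case False
    then show ?thesis using 3 by auto
  qed
qed

definition cert :: tr where
  "cert = Nd 0 (Nd 3 (Nd 7 (Nd 1 (Nd 8 (Lf [0,1,3,7,8]) (Nd 15 (Lf [0,1,3,7,15]) (Nd 6 (Nd 10 (Lf 
    [1,3,7,6,10]) (Nd 14 (Lf [1,3,7,6,14]) (Nd 12 (Nd 13 (Lf [0,1,3,12,13]) (Dd 13 14 15)) (Dd 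
    8 10 12)))) (Nd 10 (Nd 13 (Nd 12 (Lf [0,1,3,12,13]) (Nd 11 (Lf [0,1,3,11,13]) (Nd 4 (Nd 9 
    (Lf [0,4,3,7,9]) (Nd 14 (Lf [1,3,4,13,14]) (Dd 6 14 15))) (Dd 4 6 8)))) (Nd 14 (Nd 11 (Nd 
    16 (Lf [1,10,11,7,16]) (Nd 5 (Lf [1,5,7,11,10]) (Nd 4 (Nd 9 (Lf [0,4,3,7,9]) (Dd 5 9 13)) 
    (Dd 4 5 6)))) (Dd 11 13 15)) (Dd 6 14 15))) (Dd 6 8 10))))) (Nd 9 (Nd 2 (Lf [0,2,3,7,9]) 
    (Nd 4 (Lf [0,4,3,7,9]) (Nd 10 (Nd 12 (Lf [3,7,9,10,12]) (Nd 14 (Nd 16 (Lf [0,9,10,14,16]) 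
    (Nd 15 (Lf [0,9,10,14,15]) (Nd 8 (Nd 13 (Lf [0,8,10,14,13]) (Dd 4 12 13)) (Dd 4 8 12)))) 
    (Nd 13 (Nd 16 (Nd 5 (Lf [0,9,5,3,16]) (Dd 1 5 14)) (Dd 1 14 16)) (Dd 4 12 13)))) (Dd 1 2 
    10)))) (Nd 10 (Nd 5 (Nd 13 (Nd 16 (Lf [0,13,5,3,16]) (Nd 8 (Lf [0,8,7,5,13]) (Nd 12 (Nd 6 
    (Lf [3,5,6,10,12]) (Nd 2 (Lf [0,2,3,5,13]) (Nd 15 (Lf [3,7,15,13,12]) (Dd 2 6 15)))) (Dd 8 
    12 16)))) (Nd 11 (Nd 14 (Lf [3,5,14,10,11]) (Nd 15 (Nd 4 (Lf [0,4,3,7,15]) (Nd 12 (Nd 6 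
    (Lf [3,5,6,10,11]) (Nd 8 (Lf [0,8,10,11,15]) (Dd 4 6 8))) (Dd 4 12 13))) (Dd 13 14 15))) 
    (Dd 9 11 13))) (Dd 1 5 9)) (Dd 1 9 10)))) (Nd 6 (Nd 9 (Nd 5 (Nd 15 (Lf [0,9,5,6,15]) (Nd 
    16 (Lf [0,9,5,3,16]) (Dd 7 15 16))) (Nd 11 (Nd 4 (Lf [0,4,3,11,9]) (Nd 16 (Lf 
    [0,9,11,3,16]) (Nd 8 (Nd 15 (Lf [6,8,9,11,15]) (Dd 7 15 16)) (Dd 7 8 16)))) (Nd 15 (Nd 10 
    (Lf [0,9,10,6,15]) (Nd 12 (Nd 2 (Nd 14 (Lf [2,3,12,14,6]) (Nd 13 (Lf [0,2,3,12,13]) (Dd 5 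
    13 14))) (Dd 2 10 11)) (Dd 10 11 12))) (Dd 7 11 15)))) (Nd 11 (Nd 5 (Nd 15 (Lf 
    [3,5,6,15,11]) (Nd 10 (Lf [3,5,6,10,11]) (Nd 8 (Nd 1 (Lf [0,1,5,6,8]) (Dd 1 9 10)) (Dd 7 8 
    9)))) (Dd 5 7 9)) (Dd 7 9 11))) (Nd 8 (Nd 15 (Nd 5 (Nd 14 (Nd 9 (Lf [0,9,5,14,15]) (Nd 11 
    (Lf [3,5,14,15,11]) (Dd 7 9 11))) (Nd 10 (Nd 11 (Lf [0,8,10,11,15]) (Nd 9 (Nd 12 (Lf 
    [3,5,9,8,12]) (Nd 16 (Lf [0,9,5,3,16]) (Dd 12 14 16))) (Dd 7 9 11))) (Dd 6 10 14))) (Dd 5 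
    6 7)) (Dd 6 7 15)) (Dd 6 7 8)))) (Nd 5 (Nd 12 (Nd 7 (Nd 4 (Nd 16 (Lf [0,4,5,7,16]) (Nd 11 
    (Lf [4,5,7,11,12]) (Nd 15 (Lf [0,4,5,7,15]) (Nd 2 (Nd 14 (Nd 1 (Lf [0,1,14,12,4]) (Dd 1 3 
    16)) (Dd 14 15 16)) (Dd 2 3 11))))) (Nd 2 (Nd 8 (Nd 13 (Lf [0,8,7,5,13]) (Nd 11 (Lf 
    [0,2,11,7,8]) (Nd 14 (Lf [5,7,8,12,14]) (Nd 15 (Nd 1 (Lf [0,1,5,7,8]) (Nd 10 (Lf 
    [2,10,8,7,15]) (Dd 1 10 14))) (Dd 11 13 15))))) (Nd 6 (Nd 16 (Lf [0,2,6,7,16]) (Nd 9 (Lf 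
    [0,2,6,5,9]) (Nd 1 (Nd 15 (Lf [0,1,5,6,15]) (Nd 11 (Lf [1,2,11,7,5]) (Nd 13 (Lf 
    [0,2,6,5,13]) (Dd 9 11 13)))) (Dd 1 3 16)))) (Dd 4 6 8))) (Dd 2 3 4))) (Nd 11 (Nd 16 (Nd 9 
    (Lf [0,9,11,12,16]) (Nd 2 (Lf [0,2,11,12,16]) (Nd 1 (Nd 4 (Lf [1,5,4,12,16]) (Dd 2 3 4)) 
    (Dd 1 2 3)))) (Dd 3 7 16)) (Dd 3 7 11))) (Nd 11 (Nd 16 (Nd 4 (Nd 7 (Lf [0,4,5,7,16]) (Nd 
    14 (Lf [0,4,5,14,16]) (Nd 10 (Nd 13 (Nd 6 (Lf [4,6,10,11,13]) (Nd 8 (Lf [0,8,10,11,13]) 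
    (Dd 6 7 8))) (Dd 12 13 14)) (Dd 10 12 14)))) (Dd 3 4 12)) (Dd 3 12 16)) (Dd 3 11 12))) (Nd 
    7 (Nd 4 (Nd 1 (Nd 6 (Nd 9 (Lf [0,4,6,7,9]) (Nd 16 (Lf [0,4,6,7,16]) (Nd 12 (Nd 14 (Lf 
    [0,1,14,6,4]) (Nd 13 (Nd 10 (Lf [0,1,10,6,4]) (Nd 11 (Lf [4,6,7,11,12]) (Dd 9 10 11))) (Dd 
    5 9 13))) (Dd 3 12 16)))) (Nd 14 (Nd 12 (Lf [0,1,14,12,4]) (Nd 11 (Nd 16 (Nd 10 (Lf 
    [1,10,11,7,16]) (Nd 2 (Lf [0,2,11,7,16]) (Dd 2 6 10))) (Dd 3 12 16)) (Dd 3 11 12))) (Dd 5 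
    6 14))) (Dd 1 3 5)) (Dd 3 4 5)) (Dd 3 5 7)))) (Nd 1 (Nd 4 (Nd 15 (Nd 8 (Nd 16 (Nd 2 (Lf 
    [1,2,4,8,16]) (Nd 13 (Lf [4,8,16,15,13]) (Nd 5 (Lf [1,5,4,8,16]) (Nd 9 (Nd 11 (Lf 
    [1,9,11,15,16]) (Nd 3 (Lf [1,3,4,8,9]) (Dd 2 3 11))) (Dd 0 9 13))))) (Nd 3 (Nd 9 (Lf 
    [1,3,4,8,9]) (Nd 10 (Lf [1,3,4,8,10]) (Nd 11 (Nd 14 (Lf [1,3,11,15,14]) (Nd 6 (Lf 
    [3,4,6,15,11]) (Dd 6 10 14))) (Dd 9 10 11)))) (Nd 7 (Nd 2 (Lf [2,4,8,7,15]) (Nd 12 (Nd 13 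
    (Lf [4,8,7,15,13]) (Nd 11 (Nd 6 (Lf [4,6,7,11,12]) (Nd 5 (Lf [4,5,7,11,12]) (Nd 14 (Lf 
    [7,8,12,14,15]) (Dd 5 6 14)))) (Dd 2 3 11))) (Dd 3 12 16))) (Dd 3 7 16)))) (Nd 9 (Nd 16 
    (Nd 13 (Lf [1,9,13,15,16]) (Nd 11 (Lf [1,9,11,15,16]) (Nd 12 (Nd 2 (Lf [1,2,4,12,16]) (Nd 
    6 (Lf [4,6,15,16,12]) (Nd 10 (Nd 5 (Lf [1,5,4,12,10]) (Nd 7 (Lf [7,9,10,12,16]) (Dd 5 6 
    7))) (Dd 2 6 10)))) (Dd 11 12 13)))) (Dd 0 8 16)) (Dd 0 8 9))) (Nd 13 (Nd 2 (Nd 14 (Lf 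
    [1,2,4,13,14]) (Nd 16 (Nd 9 (Lf [1,2,4,13,9]) (Nd 8 (Lf [1,2,4,8,16]) (Dd 0 8 9))) (Dd 0 
    15 16))) (Dd 0 2 15)) (Dd 0 13 15))) (Nd 13 (Nd 8 (Nd 2 (Nd 5 (Nd 15 (Lf [1,2,15,13,5]) 
    (Nd 11 (Lf [1,2,11,13,5]) (Nd 7 (Nd 12 (Lf [5,7,8,12,13]) (Nd 10 (Lf [1,5,7,8,10]) (Dd 10 
    11 12))) (Dd 7 11 15)))) (Nd 6 (Nd 9 (Lf [1,2,6,8,9]) (Nd 3 (Nd 16 (Lf [1,2,6,8,16]) (Nd 7 
    (Nd 10 (Lf [1,3,7,6,10]) (Nd 12 (Lf [2,3,12,8,6]) (Nd 14 (Lf [1,3,7,6,14]) (Dd 10 12 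
    14)))) (Dd 5 7 9))) (Dd 3 4 5))) (Dd 4 5 6))) (Dd 0 2 4)) (Dd 0 4 8)) (Dd 0 4 13))) (Nd 2 
    (Nd 9 (Nd 16 (Nd 4 (Nd 5 (Nd 10 (Lf [2,4,5,9,10]) (Nd 11 (Lf [2,4,5,9,11]) (Nd 12 (Nd 15 
    (Lf [2,4,12,16,15]) (Nd 7 (Lf [4,5,7,16,12]) (Dd 7 11 15))) (Dd 10 11 12)))) (Nd 14 (Nd 3 
    (Nd 13 (Lf [3,4,13,14,16]) (Nd 6 (Lf [2,3,16,14,6]) (Nd 15 (Nd 12 (Lf [2,3,12,14,15]) (Nd 
    8 (Lf [2,4,8,16,15]) (Nd 10 (Lf [2,3,16,14,10]) (Dd 6 8 10)))) (Dd 0 13 15)))) (Dd 1 3 5)) 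
    (Dd 1 5 14))) (Nd 13 (Nd 8 (Nd 14 (Lf [8,9,13,14,16]) (Nd 15 (Lf [8,9,13,15,16]) (Nd 6 (Nd 
    3 (Lf [2,3,16,8,6]) (Nd 5 (Nd 11 (Lf [2,6,5,9,11]) (Nd 12 (Lf [5,6,8,12,13]) (Dd 3 4 12))) 
    (Dd 1 3 5))) (Dd 6 14 15)))) (Dd 0 4 8)) (Dd 0 4 13))) (Dd 0 1 16)) (Dd 0 1 9)) (Dd 0 1 
    2))) "

lemma cert_ok: "chk [] [] cert"
  unfolding cert_def by (simp add: e17_def nb_simps)

theorem theorem1p3:
  shows "\<exists>(V :: nat set) E. simple_graph V E \<and> indep_number V E \<le> 3
           \<and> \<not> perfectly_divisible V E"
proof (intro exI conjI)
  let ?V = "{0..<17::nat}"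
  show "simple_graph ?V e17"
    unfolding simple_graph_def
  proof (intro conjI allI impI)
    show "finite ?V" by simp
  next
    fix u v assume "e17 u v" then show "e17 v u" by (rule e17_sym)
  next
    fix v show "\<not> e17 v v" by (rule e17_irrefl)
  next
    fix u v assume "e17 u v" then show "u \<in> ?V" using e17_lt by auto
  next
    fix u v assume "e17 u v" then show "v \<in> ?V" using e17_lt by auto
  qed
  show "indep_number ?V e17 \<le> 3"
    unfolding indep_number_def
  proof (rule Max_card_le[where V="?V"])
    fix S assume "S \<subseteq> ?V" "is_indep ?V e17 S"
    show "card S \<le> 3"
    proof (rule ccontr)
      assume "\<not> card S \<le> 3"
      then obtain a b c d where "a \<in> S" "b \<in> S" "c \<in> S" "d \<in> S" "distinct [a,b,c,d]"
        using card_four by (metis not_le)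
      moreover have "a < 17" "b < 17" "c < 17" "d < 17" using calculation \<open>S \<subseteq> ?V\<close> by auto
      ultimately show False using \<open>is_indep ?V e17 S\<close> noI4'[of a b c d]
        unfolding is_indep_def by auto
    qed
  qed (auto simp: is_indep_def)
  show "\<not> perfectly_divisible ?V e17"
  proof
    assume pd: "perfectly_divisible ?V e17"
    have "e17 0 1" by (simp add: e17_def nb_simps)
    then obtain A B where AB: "A \<union> B = ?V" "A \<inter> B = {}" "perfect A e17"
      "clique_number B e17 < clique_number ?V e17"
    proof -
      have "\<exists>u\<in>?V. \<exists>v\<in>?V. e17 u v" using \<open>e17 0 1\<close> by force
      then have "\<exists>A B. A \<union> B = ?V \<and> A \<inter> B = {} \<and> perfect A e17
               \<and> clique_number B e17 < clique_number ?V e17"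
        using pd unfolding perfectly_divisible_def by blast
      then show ?thesis using that by blast
    qed
    have wV: "clique_number ?V e17 \<le> 3"
      unfolding clique_number_def
    proof (rule Max_card_le[where V="?V"])
      fix S assume "S \<subseteq> ?V" "is_clique ?V e17 S"
      show "card S \<le> 3"
      proof (rule ccontr)
        assume "\<not> card S \<le> 3"
        then obtain a b c d where "a \<in> S" "b \<in> S" "c \<in> S" "d \<in> S" "distinct [a,b,c,d]"
          using card_four by (metis not_le)
        moreover have "a < 17" "b < 17" "c < 17" "d < 17" using calculation \<open>S \<subseteq> ?V\<close> by auto
        ultimately show False using \<open>is_clique ?V e17 S\<close> noK4'[of a b c d]
          unfolding is_clique_def by auto
      qed
    qed (auto simp: is_clique_def)
    have fB: "finite B" using AB(1) by (metis finite_Un finite_atLeastLessThan)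
    have tf: "\<forall>a\<in>B. \<forall>b\<in>B. \<forall>c\<in>B. \<not> (e17 a b \<and> e17 b c \<and> e17 a c)"
    proof (intro ballI notI)
      fix a b c assume abc: "a \<in> B" "b \<in> B" "c \<in> B" "e17 a b \<and> e17 b c \<and> e17 a c"
      then have "is_clique B e17 {a,b,c}" unfolding is_clique_def using e17_sym by blast
      then have "card {a,b,c} \<le> clique_number B e17" using clique_ge fB by blast
      moreover have "card {a,b,c} = 3" using abc e17_irrefl by (metis card_3_iff)
      ultimately show False using AB(4) wV by linarith
    qed
    obtain C where C: "is_c5 C" "set C \<inter> B = {}"
      using chk_sound[OF cert_ok _ _ tf] by auto
    then obtain a b c d e where Ce: "C = [a,b,c,d,e]"
      by (cases C rule: is_c5.cases) auto
    have F: "distinct [a,b,c,d,e]" "e17 a b" "e17 b c" "e17 c d" "e17 d e" "e17 e a"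
      "\<not> e17 a c" "\<not> e17 a d" "\<not> e17 b d" "\<not> e17 b e" "\<not> e17 c e"
      using C(1) unfolding Ce is_c5.simps by blast+
    have lt: "a < 17" "b < 17" "c < 17" "d < 17" "e < 17" using F(2-6) e17_lt by blast+
    have nB: "a \<notin> B" "b \<notin> B" "c \<notin> B" "d \<notin> B" "e \<notin> B" using C(2) unfolding Ce by auto
    have s1: "{0..<17} - B \<subseteq> A" using AB(1) by blast
    have s2: "{a,b,c,d,e} \<subseteq> {0..<17} - B" using lt nB by simp
    have sub: "{a,b,c,d,e} \<subseteq> A" using s1 s2 by (rule subset_trans[rotated])
    have "\<not> perfect A e17"
      by (rule c5_imperfect[OF F sub e17_sym e17_irrefl])
    then show False using AB(3) by blast
  qed
qed

end
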